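(* Let $n\ge1$, $\gamma,\delta\in(0,1]$ and $c>0$. Set $j:=\lceil1/\gamma\rceil$, $\theta:=j-1/\gamma\in[0,1)$, and $$\omega_\star:=\delta^{\frac{1+\theta}{2(\theta+2/\gamma)}},\qquad R_\star:=\Big(\frac{\delta^{\frac{1+\theta}{2}}}{c^jc_{n,j}}\Big)^{\frac{1}{2j}},$$ where $c_{n,j}>0$ is a constant depending only on $n,j$ with the property stated in the context. Assume $\varphi:[0,R_\star]\to\mathbb{R}$ satisfies $$r^{1-n}(r^{n-1}\varphi')'=\frac{c\,\omega_\star}{\delta}\varphi^{1+\gamma}\ \text{ in }(0,R_\star),\qquad\varphi(0)=1,\qquad\varphi'(0)=0.$$ Then $(\omega_\star\delta)^{1/\gamma}\varphi(R_\star)\ge\delta$.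
   Context: Property of $c_{n,k}$ ($k=1,2,\dots$): for all $\lambda,R>0$, $\alpha>1$ and every nonnegative solution $\phi:[0,R]\to\mathbb{R}$ of $r^{1-n}(r^{n-1}\phi')'=\lambda\phi^\alpha$ in $(0,R)$, $\phi(0)=1$, $\phi'(0)=0$, one has $\phi(r)\ge c_{n,k}\lambda^kr^{2k}$ for all $r\in(0,R)$ (such constants, depending only on $n,k$, exist). Here $c_{n,j}$ is this constant with $k=j$. *)

theory Defs
  imports "HOL-Analysis.Analysis"
begin

text \<open>phi is a solution on [0,R] of  r^(1-n) (r^(n-1) phi')' = lam * phi^alpha  in (0,R),
  with phi(0) = 1, phi'(0) = 0.  phi is continuous on [0,R], differentiable on [0,R)
  (one-sided at 0) with derivative dphi, and r^(n-1) dphi(r) is differentiable on (0,R).\<close>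
definition radial_sol :: "nat \<Rightarrow> real \<Rightarrow> real \<Rightarrow> real \<Rightarrow> (real \<Rightarrow> real) \<Rightarrow> bool" where
  "radial_sol n lam alpha R phi \<longleftrightarrow>
     continuous_on {0..R} phi \<and> phi 0 = 1 \<and>
     (\<exists>dphi D.
        (\<forall>r\<in>{0..<R}. (phi has_real_derivative dphi r) (at r within {0..<R})) \<and>
        dphi 0 = 0 \<and>
        (\<forall>r\<in>{0<..<R}. ((\<lambda>s. s ^ (n - 1) * dphi s) has_real_derivative D r) (at r) \<and>
                         r powr (1 - real n) * D r = lam * phi r powr alpha))"

definition c_const_prop :: "nat \<Rightarrow> nat \<Rightarrow> real \<Rightarrow> bool" where
  "c_const_prop n k C \<longleftrightarrow>
     (\<forall>lam R alpha phi. lam > 0 \<longrightarrow> R > 0 \<longrightarrow> alpha > 1 \<longrightarrow>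
        radial_sol n lam alpha R phi \<longrightarrow> (\<forall>r\<in>{0..R}. phi r \<ge> 0) \<longrightarrow>
        (\<forall>r\<in>{0<..<R}. phi r \<ge> C * lam ^ k * r ^ (2 * k)))"

end

theory Submission
  imports Defs
begin

theorem lemma4p7:
  fixes n j :: nat and \<gamma> \<delta> c C \<theta> \<omega> R :: real and \<phi> :: "real \<Rightarrow> real"
  assumes "n \<ge> 1"
    and "0 < \<gamma>" "\<gamma> \<le> 1" and "0 < \<delta>" "\<delta> \<le> 1" and "c > 0"
    and "j = nat \<lceil>1 / \<gamma>\<rceil>"
    and "\<theta> = real j - 1 / \<gamma>"
    and "\<omega> = \<delta> powr ((1 + \<theta>) / (2 * (\<theta> + 2 / \<gamma>)))"
    and "C > 0" and "c_const_prop n j C"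
    and "R = (\<delta> powr ((1 + \<theta>) / 2) / (c ^ j * C)) powr (1 / (2 * real j))"
    and "radial_sol n (c * \<omega> / \<delta>) (1 + \<gamma>) R \<phi>"
    and "\<forall>r\<in>{0..R}. \<phi> r \<ge> 0"
  shows "(\<omega> * \<delta>) powr (1 / \<gamma>) * \<phi> R \<ge> \<delta>"
proof -
  have g1: "1 / \<gamma> \<ge> 1" using assms(2,3) by simp
  have cz: "\<lceil>1 / \<gamma>\<rceil> \<ge> 0" using assms(2) by (simp add: less_le_trans[of "-1" 0])
  have "real j = real_of_int \<lceil>1 / \<gamma>\<rceil>" using assms(7) cz by simp
  then have jge: "real j \<ge> 1 / \<gamma>" by simp
  have j1: "j \<ge> 1" using jge g1 by linarith
  have th0: "\<theta> \<ge> 0" using jge assms(8) by simp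
  have den: "\<theta> + 2 / \<gamma> > 0" using th0 assms(2) by (simp add: add_nonneg_pos)
  have wpos: "\<omega> > 0" using assms(9,4) by simp
  define B where "B = \<delta> powr ((1 + \<theta>) / 2) / (c ^ j * C)"
  have Bpos: "B > 0" unfolding B_def using assms(4,6,10) by simp
  have Rpos: "R > 0" using assms(12,4,6,10) Bpos B_def by simp
  define L where "L = c * \<omega> / \<delta>"
  have Lpos: "L > 0" unfolding L_def using assms(4,6) wpos by simp
  have bound: "\<forall>r\<in>{0<..<R}. \<phi> r \<ge> C * L ^ j * r ^ (2 * j)"
  proof -
    have "1 < 1 + \<gamma>" using assms(2) by simp
    then show ?thesis
      using assms(11) Lpos Rpos assms(13,14) unfolding c_const_prop_def L_def by blast
  qed
  have cont: "continuous_on {0..R} \<phi>" using assms(13) unfolding radial_sol_def by blast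
  have lim1: "(\<phi> \<longlongrightarrow> \<phi> R) (at R within {0..R})"
    using cont Rpos by (simp add: continuous_on_def)
  have "(\<phi> \<longlongrightarrow> \<phi> R) (at_left R)"
  proof -
    have "(\<phi> \<longlongrightarrow> \<phi> R) (at R within {0..<R})"
      by (rule tendsto_within_subset[OF lim1]) auto
    moreover have "at R within {0..<R} = at_left R"
    proof -
      have "at R within {0..<R} = at R within ({..<R} \<inter> {0<..})"
        by (rule at_within_nhd[where S="{0<..}"]) (use Rpos in auto)
      also have "\<dots> = at_left R"
        by (rule at_within_nhd[where S="{0<..}"]) (use Rpos in auto)
      finally show ?thesis .
    qed
    ultimately show ?thesis by simp
  qed
  moreover have "((\<lambda>r. C * L ^ j * r ^ (2 * j)) \<longlongrightarrow> C * L ^ j * R ^ (2 * j)) (at_left R)"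
    by (intro tendsto_intros)
  moreover have "eventually (\<lambda>r. C * L ^ j * r ^ (2 * j) \<le> \<phi> r) (at_left R)"
  proof -
    have "eventually (\<lambda>r. r \<in> {0<..<R}) (at_left R)"
      using eventually_at_left_real[OF Rpos] .
    then show ?thesis by eventually_elim (use bound in auto)
  qed
  ultimately have phiR: "\<phi> R \<ge> C * L ^ j * R ^ (2 * j)"
    by (intro tendsto_le[OF trivial_limit_at_left_real]) auto
  have R2j: "R ^ (2 * j) = B"
  proof -
    have "R ^ (2 * j) = R powr real (2 * j)" using Rpos by (simp only: powr_realpow)
    also have "\<dots> = B" using assms(12) j1 Bpos unfolding B_def[symmetric]
      by (simp add: powr_powr)
    finally show ?thesis .
  qed
  have key: "(\<omega> * \<delta>) powr (1 / \<gamma>) * (C * L ^ j * B) = \<delta>"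
  proof -
    have "C * L ^ j * B = \<omega> ^ j * \<delta> powr ((1 + \<theta>) / 2) / \<delta> ^ j"
      unfolding L_def B_def using assms(6,10,4) by (simp add: power_divide power_mult_distrib)
    also have "\<dots> = \<omega> powr real j * \<delta> powr ((1 + \<theta>) / 2 - real j)"
      using wpos assms(4) by (simp add: powr_realpow powr_diff)
    finally have e1: "C * L ^ j * B = \<omega> powr real j * \<delta> powr ((1 + \<theta>) / 2 - real j)" .
    have "(\<omega> * \<delta>) powr (1 / \<gamma>) * (C * L ^ j * B)
        = \<omega> powr (1/\<gamma> + real j) * \<delta> powr (1/\<gamma> + ((1 + \<theta>) / 2 - real j))"
      unfolding e1 using wpos assms(4) by (simp add: powr_mult powr_add)
    also have "\<omega> powr (1/\<gamma> + real j) = \<delta> powr ((1 + \<theta>) / 2)"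
    proof -
      have "1/\<gamma> + real j = \<theta> + 2 / \<gamma>" using assms(8) by simp
      moreover have "(1 + \<theta>) / (2 * (\<theta> + 2 / \<gamma>)) * (\<theta> + 2 / \<gamma>) = (1 + \<theta>) / 2"
        using den by (simp add: field_simps)
      ultimately show ?thesis using assms(9) by (simp only: powr_powr)
    qed
    also have "\<delta> powr ((1 + \<theta>) / 2) * \<delta> powr (1/\<gamma> + ((1 + \<theta>) / 2 - real j)) = \<delta> powr 1"
    proof -
      have "(1 + \<theta>) / 2 + (1/\<gamma> + ((1 + \<theta>) / 2 - real j)) = 1" using assms(8) by simp
      then show ?thesis by (simp only: powr_add[symmetric])
    qed
    finally show ?thesis using assms(4) by simp
  qed
  have "(\<omega> * \<delta>) powr (1 / \<gamma>) * \<phi> R \<ge> (\<omega> * \<delta>) powr (1 / \<gamma>) * (C * L ^ j * B)"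
    using phiR R2j by (intro mult_left_mono) auto
  then show ?thesis using key by simp
qed

end
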